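(* Let $p$ be a prime, $\Delta<0$ a discriminant, and $(A,B,C)\in \mathrm{CL}(\Delta p^2)$. Let $(a,b,c)\in\mathrm{CL}(\Delta)$ be the (unique) class with $(A,B,C)\in\Psi_p(a,b,c)$. Then $$P_{p,0}(A,B,C,q)=(a,b,c,q^{p^2}).$$
   Context: A form $(a,b,c)$ denotes the $SL(2,\mathbb Z)$-equivalence class of the positive definite form $ax^2+bxy+cy^2$ ($a>0$) of discriminant $b^2-4ac<0$; it is primitive if $\gcd(a,b,c)=1$, and $\mathrm{CL}(\Delta)$ is the set of classes of primitive forms of discriminant $\Delta$. The theta series $(a,b,c,q):=\sum_{(x,y)\in\mathbb Z^2}q^{ax^2+bxy+cy^2}$ depends only on the class; $(a,b,c,q^k)$ is this series with $q\mapsto q^k$. For $m\ge1$, $0\le r<m$: $P_{m,r}\sum_{n\ge0}a(n)q^n=\sum_{n\ge0}a(mn+r)q^{mn+r}$. For a prime $p$ and primitive $(a,b,c)$ of discriminant $\Delta$, $\Psi_p(a,b,c)$ is the set of distinct classes of primitive forms occurring in the list $(a,bp,cp^2)$, $(ap^2,\,p(b+2ah),\,ah^2+bh+c)$ ($0\le h<p$) of forms of discriminant $\Delta p^2$. Known fact (Buell): $\Psi_p$ is well defined on classes, and the sets $\Psi_p(f)$, $f\in\mathrm{CL}(\Delta)$, are pairwise disjoint and partition $\mathrm{CL}(\Delta p^2)$; moreover each class of $\Psi_p(a,b,c)$ occurs exactly $w$ times in the list, where $w=3$ if $\Delta=-3$, $w=2$ if $\Delta=-4$, $w=1$ if $\Delta<-4$.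 *)

theory Defs
  imports "HOL-Computational_Algebra.Computational_Algebra"
begin

type_synonym form = "int \<times> int \<times> int"

definition form_val :: "form \<Rightarrow> int \<Rightarrow> int \<Rightarrow> int" where
  "form_val f x y = (case f of (a, b, c) \<Rightarrow> a * x^2 + b * x * y + c * y^2)"

definition disc :: "form \<Rightarrow> int" where
  "disc f = (case f of (a, b, c) \<Rightarrow> b^2 - 4 * a * c)"

definition pos_def_form :: "form \<Rightarrow> bool" where
  "pos_def_form f = (case f of (a, b, c) \<Rightarrow> a > 0 \<and> disc f < 0)"

definition primitive_form :: "form \<Rightarrow> bool" where
  "primitive_form f = (case f of (a, b, c) \<Rightarrow> gcd a (gcd b c) = 1)"

text \<open>Action of the matrix (al be; ga de) in SL(2,Z): (x,y) to (al x + be y, ga x + de y).\<close>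
definition form_act :: "form \<Rightarrow> int \<Rightarrow> int \<Rightarrow> int \<Rightarrow> int \<Rightarrow> form" where
  "form_act f al be ga de = (case f of (a, b, c) \<Rightarrow>
     (a*al^2 + b*al*ga + c*ga^2,
      2*a*al*be + b*(al*de + be*ga) + 2*c*ga*de,
      a*be^2 + b*be*de + c*de^2))"

definition form_equiv :: "form \<Rightarrow> form \<Rightarrow> bool" where
  "form_equiv f g = (\<exists>al be ga de. al*de - be*ga = 1 \<and> g = form_act f al be ga de)"

definition form_class :: "form \<Rightarrow> form set" where
  "form_class f = {g. form_equiv f g}"

definition CL :: "int \<Rightarrow> form set set" where
  "CL D = {form_class f | f. pos_def_form f \<and> primitive_form f \<and> disc f = D}"

definition Psi_list :: "nat \<Rightarrow> form \<Rightarrow> form list" where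
  "Psi_list p f = (case f of (a, b, c) \<Rightarrow>
     (a, b * int p, c * int p^2) #
     map (\<lambda>h. (a * int p^2, int p * (b + 2*a*h), a*h^2 + b*h + c)) [0..int p - 1])"

definition Psi :: "nat \<Rightarrow> form \<Rightarrow> form set set" where
  "Psi p f = form_class ` {g \<in> set (Psi_list p f). primitive_form g}"

definition theta :: "form \<Rightarrow> int fps" where
  "theta f = Abs_fps (\<lambda>n. int (card {(x, y). form_val f x y = int n}))"

definition P_op :: "nat \<Rightarrow> nat \<Rightarrow> int fps \<Rightarrow> int fps" where
  "P_op m r F = Abs_fps (\<lambda>n. if n mod m = r then F $ n else 0)"

end

theory Submission
  imports Defs
begin

definition gv :: "form \<Rightarrow> int \<times> int \<Rightarrow> int" where
  "gv f v = form_val f (fst v) (snd v)"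

lemma theta_nth: "theta f $ n = int (card {v. gv f v = int n})"
proof -
  have "{(x, y). form_val f x y = int n} = {v. gv f v = int n}"
    by (auto simp: gv_def)
  thus ?thesis by (simp add: theta_def)
qed

lemma compose_Xpow_nth:
  fixes F :: "int fps"
  assumes "k > 0"
  shows "(F oo fps_X^k) $ n = (if k dvd n then F $ (n div k) else 0)"
proof -
  have "(F oo fps_X^k) $ n = (\<Sum>i\<in>{0..n}. F $ i * (if n = k * i then 1 else 0))"
    by (simp add: fps_compose_nth power_mult[symmetric])
  also have "\<dots> = (\<Sum>i\<in>{0..n}. if i = n div k \<and> k dvd n then F $ i else 0)"
    using assms by (intro sum.cong) auto
  also have "\<dots> = (if k dvd n then F $ (n div k) else 0)"
  proof (cases "k dvd n")
    case True
    have "n div k \<le> n" by simp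
    thus ?thesis using True by (simp add: sum.delta')
  qed simp
  finally show ?thesis .
qed

lemma theta_act:
  assumes "al*de - be*ga = 1"
  shows "theta (form_act g al be ga de) = theta g"
proof (rule fps_ext)
  fix n
  define \<psi> where "\<psi> = (\<lambda>v::int\<times>int. (al * fst v + be * snd v, ga * fst v + de * snd v))"
  have val: "gv (form_act g al be ga de) v = gv g (\<psi> v)" for v
    by (cases g; cases v) (simp add: gv_def form_val_def form_act_def \<psi>_def power2_eq_square algebra_simps)
  have inj: "inj \<psi>"
  proof (rule injI)
    fix u v assume "\<psi> u = \<psi> v"
    hence e1: "al * fst u + be * snd u = al * fst v + be * snd v"
      and e2: "ga * fst u + de * snd u = ga * fst v + de * snd v" by (auto simp: \<psi>_def)
    have "fst u = (al*de - be*ga) * fst u" using assms by simp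
    also have "\<dots> = de * (al * fst u + be * snd u) - be * (ga * fst u + de * snd u)" by algebra
    also have "\<dots> = de * (al * fst v + be * snd v) - be * (ga * fst v + de * snd v)" using e1 e2 by simp
    also have "\<dots> = (al*de - be*ga) * fst v" by algebra
    finally have f: "fst u = fst v" using assms by simp
    have "snd u = (al*de - be*ga) * snd u" using assms by simp
    also have "\<dots> = al * (ga * fst u + de * snd u) - ga * (al * fst u + be * snd u)" by algebra
    also have "\<dots> = al * (ga * fst v + de * snd v) - ga * (al * fst v + be * snd v)" using e1 e2 by simp
    also have "\<dots> = (al*de - be*ga) * snd v" by algebra
    finally have "snd u = snd v" using assms by simp
    with f show "u = v" by (simp add: prod_eq_iff)
  qed
  have surj: "u \<in> range \<psi>" for u
  proof -
    have "\<psi> (de * fst u - be * snd u, - ga * fst u + al * snd u) = ((al*de - be*ga) * fst u, (al*de - be*ga) * snd u)"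
      by (simp add: \<psi>_def algebra_simps)
    thus ?thesis using assms by (metis prod.collapse mult_1 rangeI)
  qed
  have "{u. gv g u = int n} = \<psi> ` {v. gv (form_act g al be ga de) v = int n}"
  proof (intro equalityI subsetI)
    fix u assume "u \<in> {u. gv g u = int n}"
    moreover obtain v where "u = \<psi> v" using surj[of u] by blast
    ultimately show "u \<in> \<psi> ` {v. gv (form_act g al be ga de) v = int n}" by (auto simp: val)
  qed (auto simp: val)
  hence "card {u. gv g u = int n} = card {v. gv (form_act g al be ga de) v = int n}"
    using inj by (simp add: card_image inj_on_subset)
  thus "theta (form_act g al be ga de) $ n = theta g $ n" by (simp add: theta_nth)
qed


lemma core:
  fixes p :: nat and g f :: form and \<phi> :: "int \<times> int \<Rightarrow> int \<times> int"
  assumes p: "p > 1"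
    and inj: "inj \<phi>"
    and val: "\<And>w. gv g (\<phi> w) = int p ^ 2 * gv f w"
    and rng: "\<And>v. int p dvd gv g v \<Longrightarrow> v \<in> range \<phi>"
  shows "P_op p 0 (theta g) = theta f oo (fps_X ^ (p^2))"
proof (rule fps_ext)
  fix n
  have k: "p^2 > 0" using p by simp
  show "P_op p 0 (theta g) $ n = (theta f oo fps_X ^ p\<^sup>2) $ n"
  proof (cases "n mod p = 0")
    case False
    have "\<not> p^2 dvd n"
    proof
      assume "p^2 dvd n" hence "p dvd n" by (meson dvd_power dvd_trans p zero_less_numeral zero_less_one less_trans)
      thus False using False by simp
    qed
    thus ?thesis using False k by (simp add: P_op_def compose_Xpow_nth)
  next
    case True
    hence pn: "int p dvd int n" by auto
    have eq: "{v. gv g v = int n} = \<phi> ` {w. int p ^ 2 * gv f w = int n}"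
    proof (intro equalityI subsetI)
      fix v assume "v \<in> {v. gv g v = int n}"
      hence v: "gv g v = int n" by simp
      then obtain w where "v = \<phi> w" using rng[of v] pn by auto
      thus "v \<in> \<phi> ` {w. int p ^ 2 * gv f w = int n}" using v val by auto
    qed (auto simp: val)
    have c: "card {v. gv g v = int n} = card {w. int p ^ 2 * gv f w = int n}"
      unfolding eq using inj by (simp add: card_image inj_on_subset)
    show ?thesis
    proof (cases "p^2 dvd n")
      case True
      then obtain m where m: "n = p^2 * m" by blast
      have "{w. int p ^ 2 * gv f w = int n} = {w. gv f w = int m}"
        using p by (auto simp: m)
      thus ?thesis using True k c m \<open>n mod p = 0\<close>
        by (simp add: P_op_def compose_Xpow_nth theta_nth)
    next
      case False
      have "{w. int p ^ 2 * gv f w = int n} = {}"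
      proof (rule ccontr)
        assume "{w. int p ^ 2 * gv f w = int n} \<noteq> {}"
        then obtain w where "int p ^ 2 * gv f w = int n" by blast
        hence "int (p^2) dvd int n" by (metis dvd_triv_left of_nat_power)
        thus False using False by (simp only: int_dvd_int_iff)
      qed
      hence "card {w. int p ^ 2 * gv f w = int n} = 0" by (simp only: card.empty)
      thus ?thesis using False k c \<open>n mod p = 0\<close>
        by (simp add: P_op_def compose_Xpow_nth theta_nth)
    qed
  qed
qed


lemma type1:
  fixes p :: nat and a b c :: int
  assumes pr: "prime p" and prim: "primitive_form (a, b * int p, c * int p^2)"
  shows "P_op p 0 (theta (a, b * int p, c * int p^2)) = theta (a, b, c) oo (fps_X ^ (p^2))"
proof (rule core[where \<phi> = "\<lambda>w. (int p * fst w, snd w)"])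
  have P: "prime (int p)" using pr by simp
  show "p > 1" using pr prime_gt_1_nat by blast
  show "inj (\<lambda>w. (int p * fst w, snd w))" using \<open>p > 1\<close>
    by (intro injI) (auto simp: prod_eq_iff)
  show "gv (a, b * int p, c * int p^2) (int p * fst w, snd w) = int p ^ 2 * gv (a, b, c) w" for w
    by (simp add: gv_def form_val_def power2_eq_square algebra_simps)
  have na: "\<not> int p dvd a"
  proof
    assume h1: "int p dvd a"
    have h2: "int p dvd b * int p" by simp
    have h3: "int p dvd c * int p^2" by (simp add: power2_eq_square)
    have g: "int p dvd gcd a (gcd (b * int p) (c * int p^2))"
      using gcd_greatest[OF h1 gcd_greatest[OF h2 h3]] .
    have "gcd a (gcd (b * int p) (c * int p^2)) = 1" using prim by (simp add: primitive_form_def)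
    with g have "int p dvd 1" by simp
    thus False using P not_prime_unit by blast
  qed
  fix v :: "int \<times> int"
  assume d: "int p dvd gv (a, b * int p, c * int p^2) v"
  obtain x y where v: "v = (x, y)" by fastforce
  have "gv (a, b * int p, c * int p^2) v = a * x^2 + int p * (b * x * y + c * int p * y^2)"
    by (simp add: v gv_def form_val_def power2_eq_square algebra_simps)
  with d have "int p dvd a * x^2" by (metis dvd_add_times_triv_right_iff mult.commute)
  hence "int p dvd x^2" using na P prime_dvd_mult_iff by blast
  hence "int p dvd x" using P prime_dvd_power by blast
  then obtain x' where "x = int p * x'" by blast
  thus "v \<in> range (\<lambda>w. (int p * fst w, snd w))" by (auto simp: v image_iff intro!: exI[of _ "(x', y)"])
qed

lemma type2:
  fixes p :: nat and a b c h :: int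
  assumes pr: "prime p"
    and prim: "primitive_form (a * int p^2, int p * (b + 2*a*h), a*h^2 + b*h + c)"
  shows "P_op p 0 (theta (a * int p^2, int p * (b + 2*a*h), a*h^2 + b*h + c)) = theta (a, b, c) oo (fps_X ^ (p^2))"
proof (rule core[where \<phi> = "\<lambda>w. (fst w - h * snd w, int p * snd w)"])
  have P: "prime (int p)" using pr by simp
  show "p > 1" using pr prime_gt_1_nat by blast
  show "inj (\<lambda>w. (fst w - h * snd w, int p * snd w))" using \<open>p > 1\<close>
    by (intro injI) (auto simp: prod_eq_iff)
  show "gv (a * int p^2, int p * (b + 2*a*h), a*h^2 + b*h + c) (fst w - h * snd w, int p * snd w) = int p ^ 2 * gv (a, b, c) w" for w
    by (simp add: gv_def form_val_def power2_eq_square algebra_simps)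
  have na: "\<not> int p dvd a*h^2 + b*h + c"
  proof
    assume h3: "int p dvd a*h^2 + b*h + c"
    have h2: "int p dvd int p * (b + 2*a*h)" by simp
    have h1: "int p dvd a * int p^2" by (simp add: power2_eq_square)
    have g: "int p dvd gcd (a * int p^2) (gcd (int p * (b + 2*a*h)) (a*h^2 + b*h + c))"
      using gcd_greatest[OF h1 gcd_greatest[OF h2 h3]] .
    have "gcd (a * int p^2) (gcd (int p * (b + 2*a*h)) (a*h^2 + b*h + c)) = 1" using prim by (simp add: primitive_form_def)
    with g have "int p dvd 1" by simp
    thus False using P not_prime_unit by blast
  qed
  fix v :: "int \<times> int"
  assume d: "int p dvd gv (a * int p^2, int p * (b + 2*a*h), a*h^2 + b*h + c) v"
  obtain x y where v: "v = (x, y)" by fastforce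
  have "gv (a * int p^2, int p * (b + 2*a*h), a*h^2 + b*h + c) v = (a*h^2 + b*h + c) * y^2 + int p * (a * int p * x^2 + (b + 2*a*h) * x * y)"
    by (simp add: v gv_def form_val_def power2_eq_square algebra_simps)
  with d have "int p dvd (a*h^2 + b*h + c) * y^2" by (metis dvd_add_times_triv_right_iff mult.commute)
  hence "int p dvd y^2" using na P prime_dvd_mult_iff by blast
  hence "int p dvd y" using P prime_dvd_power by blast
  then obtain y' where y: "y = int p * y'" by blast
  have "(x, y) = (fst (x + h*y', y') - h * snd (x + h*y', y'), int p * snd (x + h*y', y'))"
    by (simp add: y)
  thus "v \<in> range (\<lambda>w. (fst w - h * snd w, int p * snd w))" unfolding v by blast
qed


theorem lemma4p3:
  fixes p :: nat and D A B C a b c :: int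
  assumes "prime p"
    and "D < 0"
    and "D mod 4 = 0 \<or> D mod 4 = 1"
    and "form_class (A, B, C) \<in> CL (D * int p^2)"
    and "form_class (a, b, c) \<in> CL D"
    and "form_class (A, B, C) \<in> Psi p (a, b, c)"
  shows "P_op p 0 (theta (A, B, C)) = theta (a, b, c) oo (fps_X ^ (p^2))"
proof -
  obtain g where gin: "g \<in> set (Psi_list p (a, b, c))" and gp: "primitive_form g"
    and gc: "form_class (A, B, C) = form_class g"
    using assms(6) unfolding Psi_def by blast
  have "form_act (A, B, C) 1 0 0 1 = (A, B, C)" by (simp add: form_act_def)
  hence "form_equiv (A, B, C) (A, B, C)" unfolding form_equiv_def
    by (metis diff_zero mult_1 mult_zero_left)
  hence "(A, B, C) \<in> form_class (A, B, C)" by (simp add: form_class_def)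
  hence "(A, B, C) \<in> form_class g" using gc by simp
  then obtain al be ga de where det: "al*de - be*ga = 1" and e: "(A, B, C) = form_act g al be ga de"
    by (auto simp: form_class_def form_equiv_def)
  have th: "theta (A, B, C) = theta g" using theta_act[OF det] e by simp
  show ?thesis
  proof (cases "g = (a, b * int p, c * int p^2)")
    case True
    thus ?thesis using th type1[OF assms(1)] gp by simp
  next
    case False
    then obtain h where "g = (a * int p^2, int p * (b + 2*a*h), a*h^2 + b*h + c)"
      using gin by (auto simp: Psi_list_def)
    thus ?thesis using th type2[OF assms(1)] gp by simp
  qed
qed

end
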